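(* Let $\mathbb K$ be a field, $0\ne t\in\mathbb K$, $\kappa\in\mathbb Z^\ell$ with $\kappa_l-\kappa_{l+1}\ge n$, $(\mathbb K,t)$ separating $\mathrm{Std}(\mathcal P_n)$, and let $\{f_{\mathfrak s\mathfrak t}\}$ be a $*$-seminormal basis of $\mathscr H_n(\mathbb K)$ with associated seminormal coefficient system $\alpha$ (so $f_{\mathfrak s\mathfrak t}T_r=\alpha_r(\mathfrak t)f_{\mathfrak s,\mathfrak t(r,r+1)}-[\rho_r(\mathfrak t)]^{-1}f_{\mathfrak s\mathfrak t}$) and scalars $\gamma_{\mathfrak t}$ with $f_{\mathfrak s\mathfrak t}f_{\mathfrak u\mathfrak v}=\delta_{\mathfrak t\mathfrak u}\gamma_{\mathfrak t}f_{\mathfrak s\mathfrak v}$. If $\mathfrak t\in\mathrm{Std}(\mathcal P_n)$, $1\le r<n$, and $\mathfrak v=\mathfrak t(r,r+1)$ is standard, then $\alpha_r(\mathfrak v)\gamma_{\mathfrak t}=\alpha_r(\mathfrak t)\gamma_{\mathfrak v}$.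
   Context: Quantum integers $[d]=[d]_t$. $\mathscr H_n(\mathbb K)=\mathscr H_n(\mathbb K,t,\kappa)$: generators $L_1..L_n,T_1..T_{n-1}$, relations $\prod_l(L_1-[\kappa_l])=0$, $(T_r+1)(T_r-t)=0$, $L_rL_s=L_sL_r$, $T_rT_s=T_sT_r$ ($|r-s|>1$), $T_sT_{s+1}T_s=T_{s+1}T_sT_{s+1}$, $T_rL_s=L_sT_r$ ($s\ne r,r+1$), $L_{r+1}(T_r-t+1)=T_rL_r+1$; $*$ the anti-involution fixing all generators. Separation: $[n]^!\prod_{l<m}\prod_{-n<d<n}[\kappa_l-\kappa_m+d]\ne0$. Content of $(l,r,c)$ is $\kappa_l-r+c$; $c_k(\mathfrak t)$ the content of $k$ in $\mathfrak t$; $\rho_r(\mathfrak t)=c_r(\mathfrak t)-c_{r+1}(\mathfrak t)$; $f_{\mathfrak s,\mathfrak w}=0$ if $\mathfrak w$ is not standard. A $*$-seminormal basis is a basis $\{f_{\mathfrak s\mathfrak t}\}$ indexed by pairs of standard tableaux of the same shape with $L_rf_{\mathfrak s\mathfrak t}=[c_r(\mathfrak s)]f_{\mathfrak s\mathfrak t}$, $f_{\mathfrak s\mathfrak t}L_r=[c_r(\mathfrak t)]f_{\mathfrak s\mathfrak t}$ and $f_{\mathfrak s\mathfrak t}^*=f_{\mathfrak t\mathfrak s}$; for such a basis there exist unique scalars $\alpha_r(\mathfrak t)$ and non-zero scalars $\gamma_{\mathfrak t}$ with the stated properties. *)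

theory Defs
  imports Main
begin

text \<open>Nodes (l,r,c): component l, row r, column c (all indices start at 1).
  A tableau with n entries is represented by its position map: k \<mapsto> node containing k,
  for k in {1..n}; outside {1..n} it is normalised to (0,0,0).\<close>

type_synonym node = "nat \<times> nat \<times> nat"
type_synonym tableau = "nat \<Rightarrow> node"

definition qint :: "'k::field \<Rightarrow> int \<Rightarrow> 'k" where
  "qint t d = (if t = 1 then of_int d else (t powi d - 1) / (t - 1))"

definition qfact :: "'k::field \<Rightarrow> nat \<Rightarrow> 'k" where
  "qfact t n = (\<Prod>k\<in>{1..n}. qint t (int k))"

definition separating :: "'k::field \<Rightarrow> nat \<Rightarrow> (nat \<Rightarrow> int) \<Rightarrow> nat \<Rightarrow> bool" where
  "separating t ell \<kappa> n \<longleftrightarrow>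
     qfact t n * (\<Prod>l\<in>{1..ell}. \<Prod>m\<in>{l<..ell}. \<Prod>d\<in>{-int n<..<int n}. qint t (\<kappa> l - \<kappa> m + d)) \<noteq> 0"

definition mp_diagram :: "nat \<Rightarrow> nat \<Rightarrow> node set \<Rightarrow> bool" where
  "mp_diagram ell n D \<longleftrightarrow> finite D \<and> card D = n \<and>
     (\<forall>l r c. (l,r,c) \<in> D \<longrightarrow> 1 \<le> l \<and> l \<le> ell \<and> 1 \<le> r \<and> 1 \<le> c) \<and>
     (\<forall>l r c. (l,r,c) \<in> D \<longrightarrow> (1 < r \<longrightarrow> (l,r-1,c) \<in> D) \<and> (1 < c \<longrightarrow> (l,r,c-1) \<in> D))"

definition shape :: "nat \<Rightarrow> tableau \<Rightarrow> node set" where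
  "shape n t = t ` {1..n}"

definition std_tableau :: "nat \<Rightarrow> nat \<Rightarrow> tableau \<Rightarrow> bool" where
  "std_tableau ell n t \<longleftrightarrow> mp_diagram ell n (shape n t) \<and> inj_on t {1..n} \<and>
     (\<forall>k. k \<notin> {1..n} \<longrightarrow> t k = (0,0,0)) \<and>
     (\<forall>i\<in>{1..n}. \<forall>j\<in>{1..n}. \<forall>l r c.
        t i = (l,r,c) \<and> (t j = (l,r,Suc c) \<or> t j = (l,Suc r,c)) \<longrightarrow> i < j)"

definition std_pairs :: "nat \<Rightarrow> nat \<Rightarrow> (tableau \<times> tableau) set" where
  "std_pairs ell n = {(s,u). std_tableau ell n s \<and> std_tableau ell n u \<and> shape n s = shape n u}"

definition content :: "(nat \<Rightarrow> int) \<Rightarrow> tableau \<Rightarrow> nat \<Rightarrow> int" where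
  "content \<kappa> t k = (case t k of (l,r,c) \<Rightarrow> \<kappa> l - int r + int c)"

definition rho :: "(nat \<Rightarrow> int) \<Rightarrow> tableau \<Rightarrow> nat \<Rightarrow> int" where
  "rho \<kappa> t r = content \<kappa> t r - content \<kappa> t (Suc r)"

definition tswap :: "nat \<Rightarrow> tableau \<Rightarrow> tableau" where
  "tswap r t = t(r := t (Suc r), Suc r := t r)"

text \<open>A K-algebra: a ring with a central unital ring homomorphism from the field K;
  scalar multiplication is c\<cdot>x = ofK c * x.\<close>
definition K_algebra :: "('k::field \<Rightarrow> 'a::ring_1) \<Rightarrow> bool" where
  "K_algebra ofK \<longleftrightarrow> (\<forall>a b. ofK (a + b) = ofK a + ofK b) \<and> (\<forall>a b. ofK (a * b) = ofK a * ofK b) \<and>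
     ofK 1 = 1 \<and> (\<forall>c x. ofK c * x = x * ofK c)"

definition hecke_relations :: "('k::field \<Rightarrow> 'a::ring_1) \<Rightarrow> 'k \<Rightarrow> nat \<Rightarrow> (nat \<Rightarrow> int) \<Rightarrow> nat
     \<Rightarrow> (nat \<Rightarrow> 'a) \<Rightarrow> (nat \<Rightarrow> 'a) \<Rightarrow> bool" where
  "hecke_relations ofK t ell \<kappa> n L T \<longleftrightarrow>
     prod_list (map (\<lambda>l. L 1 - ofK (qint t (\<kappa> l))) [1..<Suc ell]) = 0 \<and>
     (\<forall>r\<in>{1..<n}. (T r + 1) * (T r - ofK t) = 0) \<and>
     (\<forall>r\<in>{1..n}. \<forall>s\<in>{1..n}. L r * L s = L s * L r) \<and>
     (\<forall>r\<in>{1..<n}. \<forall>s\<in>{1..<n}. (r + 1 < s \<or> s + 1 < r) \<longrightarrow> T r * T s = T s * T r) \<and>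
     (\<forall>s. 1 \<le> s \<and> s + 1 < n \<longrightarrow> T s * T (s+1) * T s = T (s+1) * T s * T (s+1)) \<and>
     (\<forall>r\<in>{1..<n}. \<forall>s\<in>{1..n}. s \<noteq> r \<and> s \<noteq> r + 1 \<longrightarrow> T r * L s = L s * T r) \<and>
     (\<forall>r\<in>{1..<n}. L (r+1) * (T r - ofK t + 1) = T r * L r + 1)"

inductive_set gen_subalg :: "('k::field \<Rightarrow> 'a::ring_1) \<Rightarrow> (nat \<Rightarrow> 'a) \<Rightarrow> (nat \<Rightarrow> 'a) \<Rightarrow> nat \<Rightarrow> 'a set"
  for ofK L T n where
  scalar: "ofK c \<in> gen_subalg ofK L T n"
| genL: "r \<in> {1..n} \<Longrightarrow> L r \<in> gen_subalg ofK L T n"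
| genT: "r \<in> {1..<n} \<Longrightarrow> T r \<in> gen_subalg ofK L T n"
| add: "x \<in> gen_subalg ofK L T n \<Longrightarrow> y \<in> gen_subalg ofK L T n \<Longrightarrow> x + y \<in> gen_subalg ofK L T n"
| mult: "x \<in> gen_subalg ofK L T n \<Longrightarrow> y \<in> gen_subalg ofK L T n \<Longrightarrow> x * y \<in> gen_subalg ofK L T n"

definition anti_involution :: "('k::field \<Rightarrow> 'a::ring_1) \<Rightarrow> (nat \<Rightarrow> 'a) \<Rightarrow> (nat \<Rightarrow> 'a) \<Rightarrow> nat \<Rightarrow> ('a \<Rightarrow> 'a) \<Rightarrow> bool" where
  "anti_involution ofK L T n star \<longleftrightarrow>
     (\<forall>x y. star (x + y) = star x + star y) \<and> (\<forall>x y. star (x * y) = star y * star x) \<and>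
     (\<forall>c. star (ofK c) = ofK c) \<and> (\<forall>x. star (star x) = x) \<and>
     (\<forall>r\<in>{1..n}. star (L r) = L r) \<and> (\<forall>r\<in>{1..<n}. star (T r) = T r)"

definition is_K_basis :: "('k::field \<Rightarrow> 'a::ring_1) \<Rightarrow> 'i set \<Rightarrow> ('i \<Rightarrow> 'a) \<Rightarrow> bool" where
  "is_K_basis ofK I b \<longleftrightarrow> finite I \<and>
     (\<forall>x. \<exists>c. x = (\<Sum>p\<in>I. ofK (c p) * b p)) \<and>
     (\<forall>c. (\<Sum>p\<in>I. ofK (c p) * b p) = 0 \<longrightarrow> (\<forall>p\<in>I. c p = 0))"

definition star_seminormal_basis :: "('k::field \<Rightarrow> 'a::ring_1) \<Rightarrow> 'k \<Rightarrow> nat \<Rightarrow> (nat \<Rightarrow> int) \<Rightarrow> nat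
     \<Rightarrow> (nat \<Rightarrow> 'a) \<Rightarrow> ('a \<Rightarrow> 'a) \<Rightarrow> (tableau \<Rightarrow> tableau \<Rightarrow> 'a) \<Rightarrow> bool" where
  "star_seminormal_basis ofK t ell \<kappa> n L star f \<longleftrightarrow>
     is_K_basis ofK (std_pairs ell n) (\<lambda>(s,u). f s u) \<and>
     (\<forall>s w. \<not> std_tableau ell n w \<longrightarrow> f s w = 0) \<and>
     (\<forall>(s,u)\<in>std_pairs ell n. \<forall>r\<in>{1..n}.
        L r * f s u = ofK (qint t (content \<kappa> s r)) * f s u \<and>
        f s u * L r = ofK (qint t (content \<kappa> u r)) * f s u) \<and>
     (\<forall>(s,u)\<in>std_pairs ell n. star (f s u) = f u s)"

end

theory Submission
  imports Defs
begin

theorem corollary3p10: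
  fixes ofK :: "'k::field \<Rightarrow> 'a::ring_1" and t :: 'k and ell n :: nat and \<kappa> :: "nat \<Rightarrow> int"
    and L T :: "nat \<Rightarrow> 'a" and star :: "'a \<Rightarrow> 'a" and f :: "tableau \<Rightarrow> tableau \<Rightarrow> 'a"
    and \<alpha> :: "nat \<Rightarrow> tableau \<Rightarrow> 'k" and \<gamma> :: "tableau \<Rightarrow> 'k"
    and tt :: tableau and r :: nat
  assumes "t \<noteq> 0" and "1 \<le> ell"
    and "\<forall>l. 1 \<le> l \<and> l < ell \<longrightarrow> \<kappa> l - \<kappa> (l + 1) \<ge> int n"
    and "separating t ell \<kappa> n"
    and "K_algebra ofK"
    and "hecke_relations ofK t ell \<kappa> n L T"
    and "\<forall>x. x \<in> gen_subalg ofK L T n"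
    and "anti_involution ofK L T n star"
    and "star_seminormal_basis ofK t ell \<kappa> n L star f"
    and alpha: "\<forall>(s,u)\<in>std_pairs ell n. \<forall>q\<in>{1..<n}.
        f s u * T q = ofK (\<alpha> q u) * f s (tswap q u) - ofK (inverse (qint t (rho \<kappa> u q))) * f s u"
    and gamma: "\<forall>(s,u)\<in>std_pairs ell n. \<forall>(x,v)\<in>std_pairs ell n.
        f s u * f x v = (if u = x then ofK (\<gamma> u) * f s v else 0)"
    and "std_tableau ell n tt" and "1 \<le> r" and "r < n"
    and "std_tableau ell n (tswap r tt)"
  shows "\<alpha> r (tswap r tt) * \<gamma> tt = \<alpha> r tt * \<gamma> (tswap r tt)"
proof -
  note A = assms
  define v where "v = tswap r tt"
  have alg: "K_algebra ofK" by fact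
  have ofadd: "\<And>a b. ofK (a + b) = ofK a + ofK b" and ofmul: "\<And>a b. ofK (a * b) = ofK a * ofK b"
    and ofcomm: "\<And>c x. ofK c * x = x * ofK c" using alg unfolding K_algebra_def by blast+
  have of0: "ofK 0 = 0" using ofadd[of 0 0] by simp
  have ofsub: "ofK (a - b) = ofK a - ofK b" for a b using ofadd[of "a - b" b] by (simp add: algebra_simps)
  have stdt: "std_tableau ell n tt" and stdv: "std_tableau ell n v" using assms(12) assms(15) unfolding v_def by auto
  have rin: "r \<in> {1..n}" "Suc r \<in> {1..n}" using assms(13,14) by auto
  have ne: "tt r \<noteq> tt (Suc r)" proof -
    have "inj_on tt {1..n}" using stdt unfolding std_tableau_def by blast
    thus ?thesis using rin by (metis inj_on_eq_iff n_not_Suc_n)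
  qed
  have vtt: "tswap r v = tt" unfolding v_def tswap_def by auto
  have tv: "tt \<noteq> v"
  proof
    assume "tt = v"
    hence "tt r = v r" by simp
    thus False using ne unfolding v_def tswap_def by simp
  qed
  have shp: "shape n v = shape n tt"
  proof -
    have "v ` {1..n} = tt ` {1..n}"
    proof
      show "v ` {1..n} \<subseteq> tt ` {1..n}" using rin unfolding v_def tswap_def by auto
      show "tt ` {1..n} \<subseteq> v ` {1..n}"
      proof
        fix y assume "y \<in> tt ` {1..n}"
        then obtain k where k: "k \<in> {1..n}" "y = tt k" by auto
        show "y \<in> v ` {1..n}"
        proof (cases "k = r")
          case True thus ?thesis using k rin unfolding v_def tswap_def
            by (auto intro!: image_eqI[where x="Suc r"])
        next
          case False
          show ?thesis
          proof (cases "k = Suc r")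
            case True thus ?thesis using k rin unfolding v_def tswap_def
              by (auto intro!: image_eqI[where x="r"])
          next
            case F2: False
            thus ?thesis using k False unfolding v_def tswap_def by (auto intro!: image_eqI[where x=k])
          qed
        qed
      qed
    qed
    thus ?thesis unfolding shape_def .
  qed
  have P: "(tt,tt) \<in> std_pairs ell n" "(tt,v) \<in> std_pairs ell n" "(v,tt) \<in> std_pairs ell n" "(v,v) \<in> std_pairs ell n"
    using stdt stdv shp unfolding std_pairs_def by auto
  have rq: "r \<in> {1..<n}" using assms(13,14) by auto
  define c where "c = inverse (qint t (rho \<kappa> tt r))"
  define c' where "c' = inverse (qint t (rho \<kappa> v r))"
  have h1: "f tt tt * T r = ofK (\<alpha> r tt) * f tt v - ofK c * f tt tt"
    using alpha P(1) rq unfolding c_def v_def by fastforce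
  have h2: "f tt v * T r = ofK (\<alpha> r v) * f tt tt - ofK c' * f tt v"
    using alpha P(2) rq vtt unfolding c'_def by fastforce
  have sb: "star_seminormal_basis ofK t ell \<kappa> n L star f" by fact
  have st1: "star (f tt v) = f v tt" "star (f tt tt) = f tt tt"
    using sb P unfolding star_seminormal_basis_def by fastforce+
  have ai: "anti_involution ofK L T n star" by fact
  have sadd: "\<And>x y. star (x + y) = star x + star y" and smul: "\<And>x y. star (x * y) = star y * star x"
    and sof: "\<And>c. star (ofK c) = ofK c" and sT: "star (T r) = T r"
    using ai rq unfolding anti_involution_def by auto
  have ssub: "star (x - y) = star x - star y" for x y
    using sadd[of "x - y" y] by (simp add: algebra_simps)
  have sscal: "star (ofK a * x) = ofK a * star x" for a x
    using smul sof ofcomm by metis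
  have h3: "T r * f v tt = ofK (\<alpha> r v) * f tt tt - ofK c' * f v tt"
  proof -
    have "star (f tt v * T r) = T r * f v tt" using smul sT st1 by simp
    moreover have "star (f tt v * T r) = ofK (\<alpha> r v) * f tt tt - ofK c' * f v tt"
      unfolding h2 ssub sscal st1 ..
    ultimately show ?thesis by simp
  qed
  have g1: "f tt v * f v tt = ofK (\<gamma> v) * f tt tt" using gamma P by fastforce
  have g2: "f tt tt * f v tt = 0" using gamma P tv by fastforce
  have g3: "f tt tt * f tt tt = ofK (\<gamma> tt) * f tt tt" using gamma P by fastforce
  have L: "(f tt tt * T r) * f v tt = ofK (\<alpha> r tt * \<gamma> v) * f tt tt"
  proof -
    have "(f tt tt * T r) * f v tt = ofK (\<alpha> r tt) * (f tt v * f v tt) - ofK c * (f tt tt * f v tt)"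
      unfolding h1 by (simp add: left_diff_distrib mult.assoc)
    also have "\<dots> = ofK (\<alpha> r tt * \<gamma> v) * f tt tt" by (simp add: g1 g2 ofmul mult.assoc)
    finally show ?thesis .
  qed
  have R: "f tt tt * (T r * f v tt) = ofK (\<alpha> r v * \<gamma> tt) * f tt tt"
  proof -
    have "f tt tt * (T r * f v tt) = (f tt tt * ofK (\<alpha> r v)) * f tt tt - (f tt tt * ofK c') * f v tt"
      unfolding h3 by (simp only: right_diff_distrib mult.assoc)
    also have "\<dots> = ofK (\<alpha> r v) * (f tt tt * f tt tt) - ofK c' * (f tt tt * f v tt)"
      unfolding ofcomm[of "\<alpha> r v" "f tt tt", symmetric] ofcomm[of c' "f tt tt", symmetric] by (simp only: mult.assoc)
    also have "\<dots> = ofK (\<alpha> r v * \<gamma> tt) * f tt tt" by (simp add: g2 g3 ofmul mult.assoc)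
    finally show ?thesis .
  qed
  have eq: "ofK (\<alpha> r tt * \<gamma> v - \<alpha> r v * \<gamma> tt) * f tt tt = 0"
    proof -
    have e: "ofK (\<alpha> r tt * \<gamma> v) * f tt tt = ofK (\<alpha> r v * \<gamma> tt) * f tt tt"
      using L R by (simp only: mult.assoc)
    show ?thesis unfolding ofsub left_diff_distrib e by simp
  qed
  have basis: "is_K_basis ofK (std_pairs ell n) (\<lambda>(s,u). f s u)"
    using sb unfolding star_seminormal_basis_def by auto
  define cc where "cc = (\<lambda>p. if p = (tt,tt) then \<alpha> r tt * \<gamma> v - \<alpha> r v * \<gamma> tt else 0)"
  have fin: "finite (std_pairs ell n)" using basis unfolding is_K_basis_def by auto
  have "(\<Sum>p\<in>std_pairs ell n. ofK (cc p) * (\<lambda>(s,u). f s u) p) = ofK (cc (tt,tt)) * f tt tt"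
    by (subst sum.remove[OF fin P(1)]) (auto simp: cc_def of0 intro!: sum.neutral)
  also have "\<dots> = 0" using eq by (simp add: cc_def)
  finally have "cc (tt,tt) = 0" using basis P(1) unfolding is_K_basis_def by blast
  thus ?thesis unfolding cc_def v_def by simp
qed

end
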